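(* Let $\{f_t\}_{t\in[0,\varepsilon]}$ be a Misiurewicz-rooted unimodal family on $I=[-1,1]$. There exists $\theta_0>0$ such that for every $\theta\in(0,\theta_0)$ and every sufficiently small $t$ the following holds. Let $U_0,U_1$ be open intervals with $0\in U_1\subset U_0\subset(-\theta,\theta)$, such that for $j=0,1$, $f_t(\partial U_j)$ is a single point preperiodic for $f_t$, $f_t^k(\partial U_j)\notin U_0$ for all $k\ge1$, and $|U_1|\le\theta\,\mathrm{dist}(U_1,\partial U_0)$. Suppose that either $0$ never returns to $U_0$ under $f_t$, or the first return of $0$ to $U_0$ lies in $U_1$. Let $\phi_1$ be the first return map of $f_t$ to $U_1$ and let $W$ be a non-central branch of $\phi_1$, with $\phi_1=f_t^n$ on $W$. Then there is an open interval $\hat W$ with $W\subset\hat W\subset U_1$ mapped diffeomorphically by $f_t^n$ onto $U_0$; if $\phi_1$ has a central branch, $\hat W$ is disjoint from it; and $|D\phi_1|\ge5$ on the non-central branches.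
   Context: The first return time to $U_1$ is $r(x)=\inf\{k\ge1\colon f_t^k(x)\in U_1\}$ and $\phi_1(x)=f_t^{r(x)}(x)$; a branch of $\phi_1$ is a maximal open interval on which $r$ is constant (and finite); a branch containing $0$ is called central. A map $f\colon I\to I$ is S-unimodal with critical point $0$ if it is $C^2$, $0$ is its unique turning point and unique point with $f'=0$, $|f'|^{-1/2}$ is convex on each component of $I\setminus\{0\}$, $f(\partial I)\subset\partial I$ and $|f'|>1$ on $\partial I$; non-degenerate if $f''(0)\ne0$. A Misiurewicz-rooted unimodal family is a family $\{f_t\}_{t\in[0,\varepsilon]}$ of non-degenerate S-unimodal maps of $I$ with critical point $0$, with $f_0$ Misiurewicz (the closure of $\{f_0^n(f_0(0))\}_{n\ge0}$ is compact forward-invariant with $|(f_0^k)'|\ge2$ on it for some $k$), and $(x,t)\mapsto f_t(x)$ of class $C^2$. *)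

theory Defs
  imports "HOL-Analysis.Analysis"
begin

abbreviation II :: "real set" where "II \<equiv> {-1..1}"

definition C2_on :: "('a::real_normed_vector \<Rightarrow> real) \<Rightarrow> 'a set \<Rightarrow> bool" where
  "C2_on F S \<longleftrightarrow>
     (\<exists>(DF :: 'a \<Rightarrow> ('a \<Rightarrow>\<^sub>L real)) (DDF :: 'a \<Rightarrow> ('a \<Rightarrow>\<^sub>L ('a \<Rightarrow>\<^sub>L real))).
        (\<forall>z\<in>S. (F has_derivative blinfun_apply (DF z)) (at z within S)) \<and>
        (\<forall>z\<in>S. (DF has_derivative blinfun_apply (DDF z)) (at z within S)) \<and>
        continuous_on S DDF)"

definition S_unimodal :: "(real \<Rightarrow> real) \<Rightarrow> bool" where
  "S_unimodal f \<longleftrightarrow>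
     f ` II \<subseteq> II \<and>
     (\<exists>f' f''.
        (\<forall>x\<in>II. (f has_real_derivative f' x) (at x within II)) \<and>
        (\<forall>x\<in>II. (f' has_real_derivative f'' x) (at x within II)) \<and>
        continuous_on II f'' \<and>
        ((mono_on {-1..0} f \<and> antimono_on {0..1} f) \<or>
         (antimono_on {-1..0} f \<and> mono_on {0..1} f)) \<and>
        (\<forall>x\<in>II. f' x = 0 \<longleftrightarrow> x = 0) \<and>
        convex_on {-1..<0} (\<lambda>x. inverse (sqrt \<bar>f' x\<bar>)) \<and>
        convex_on {0<..1} (\<lambda>x. inverse (sqrt \<bar>f' x\<bar>)) \<and>
        f (-1) \<in> {-1, 1} \<and> f 1 \<in> {-1, 1} \<and>
        \<bar>f' (-1)\<bar> > 1 \<and> \<bar>f' 1\<bar> > 1)"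

definition nondegenerate :: "(real \<Rightarrow> real) \<Rightarrow> bool" where
  "nondegenerate f \<longleftrightarrow> (\<exists>d. (deriv f has_real_derivative d) (at 0) \<and> d \<noteq> 0)"

definition misiurewicz :: "(real \<Rightarrow> real) \<Rightarrow> bool" where
  "misiurewicz f \<longleftrightarrow>
     (let K = closure {(f ^^ n) (f 0) | n. True} in
       compact K \<and> f ` K \<subseteq> K \<and>
       (\<exists>k. \<forall>x\<in>K. \<exists>d. ((f ^^ k) has_real_derivative d) (at x within II) \<and> \<bar>d\<bar> \<ge> 2))"

definition misiurewicz_rooted_family :: "(real \<Rightarrow> real \<Rightarrow> real) \<Rightarrow> real \<Rightarrow> bool" where
  "misiurewicz_rooted_family f \<epsilon> \<longleftrightarrow>
     \<epsilon> > 0 \<and>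
     (\<forall>t\<in>{0..\<epsilon>}. S_unimodal (f t) \<and> nondegenerate (f t)) \<and>
     misiurewicz (f 0) \<and>
     C2_on (\<lambda>p. f (snd p) (fst p)) (II \<times> {0..\<epsilon>})"

definition open_interval :: "real set \<Rightarrow> bool" where
  "open_interval W \<longleftrightarrow> (\<exists>a b. a < b \<and> W = {a<..<b})"

definition preperiodic :: "(real \<Rightarrow> real) \<Rightarrow> real \<Rightarrow> bool" where
  "preperiodic f p \<longleftrightarrow> (\<exists>m n. n \<ge> 1 \<and> (f ^^ (m + n)) p = (f ^^ m) p)"

definition returns :: "(real \<Rightarrow> real) \<Rightarrow> real set \<Rightarrow> real \<Rightarrow> bool" where
  "returns f U x \<longleftrightarrow> (\<exists>k\<ge>1. (f ^^ k) x \<in> U)"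

definition ret_time :: "(real \<Rightarrow> real) \<Rightarrow> real set \<Rightarrow> real \<Rightarrow> nat" where
  "ret_time f U x = (LEAST k. k \<ge> 1 \<and> (f ^^ k) x \<in> U)"

definition first_return :: "(real \<Rightarrow> real) \<Rightarrow> real set \<Rightarrow> real \<Rightarrow> real" where
  "first_return f U x = (f ^^ ret_time f U x) x"

definition const_ret_interval :: "(real \<Rightarrow> real) \<Rightarrow> real set \<Rightarrow> real set \<Rightarrow> bool" where
  "const_ret_interval f U W \<longleftrightarrow>
     open_interval W \<and> W \<subseteq> U \<and> (\<forall>x\<in>W. returns f U x) \<and>
     (\<exists>n. \<forall>x\<in>W. ret_time f U x = n)"

definition is_branch :: "(real \<Rightarrow> real) \<Rightarrow> real set \<Rightarrow> real set \<Rightarrow> bool" where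
  "is_branch f U W \<longleftrightarrow> const_ret_interval f U W \<and>
     (\<forall>W'. const_ret_interval f U W' \<and> W \<subseteq> W' \<longrightarrow> W' = W)"

end

theory Submission
  imports Defs
begin
lemma convex_deriv_mono:
  fixes u :: "real \<Rightarrow> real"
  assumes "convex_on A u" "open A" "connected A" "x\<in>A" "y\<in>A" "x \<le> y"
   "(u has_real_derivative ux) (at x)" "(u has_real_derivative uy) (at y)"
  shows "ux \<le> uy"
proof (cases "x = y")
  case True then show ?thesis using assms DERIV_unique by blast
next
  case False
  have ix: "x \<in> interior A" "y \<in> interior A" using assms interior_open by auto
  have t1: "u y - u x \<ge> ux * (y - x)"
    by (rule convex_on_imp_above_tangent[OF assms(1,3) ix(1) assms(5)])
       (rule has_field_derivative_at_within[OF assms(7)])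
  have t2: "u x - u y \<ge> uy * (x - y)"
    by (rule convex_on_imp_above_tangent[OF assms(1,3) ix(2) assms(4)])
       (rule has_field_derivative_at_within[OF assms(8)])
  from t1 t2 have "ux * (y - x) \<le> uy * (y - x)" by (simp add: algebra_simps)
  moreover have "y - x > 0" using False assms(6) by simp
  ultimately show ?thesis by simp
qed

lemma pu_convex:
  fixes u p u' :: "real \<Rightarrow> real"
  assumes J: "open J" "connected J"
   and upos: "\<forall>x\<in>J. u x > 0"
   and uder: "\<forall>x\<in>J. (u has_real_derivative u' x) (at x)"
   and umono: "\<forall>x\<in>J. \<forall>y\<in>J. x \<le> y \<longrightarrow> u' x \<le> u' y"
   and pder: "\<forall>x\<in>J. (p has_real_derivative \<gamma> / (u x)^2) (at x)"
   and ppos: "\<forall>x\<in>J. p x > 0"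
  shows "convex_on J (\<lambda>x. p x * u x)"
proof (rule convex_on_realI[where f' = "\<lambda>x. \<gamma> / u x + p x * u' x"])
  show "connected J" by fact
  fix x assume x: "x \<in> J"
  have "((\<lambda>x. p x * u x) has_real_derivative (\<gamma> / (u x)^2 * u x + p x * u' x)) (at x)"
    using pder uder x by (auto intro!: derivative_eq_intros)
  moreover have "\<gamma> / (u x)^2 * u x = \<gamma> / u x" using upos x by (simp add: power2_eq_square)
  ultimately show "((\<lambda>x. p x * u x) has_real_derivative (\<gamma> / u x + p x * u' x)) (at x)" by simp
next
  fix x y assume x: "x \<in> J" and y: "y \<in> J" and xy: "x \<le> y"
  have sub: "{x..y} \<subseteq> J" using connected_contains_Icc[OF J(2) x y] .
  have Fmono: "F x \<le> F y" if Fd: "\<And>t. t \<in> {x..y} \<Longrightarrow> (F has_real_derivative F' t) (at t)"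
     and Fp: "\<And>t. t \<in> {x..y} \<Longrightarrow> F' t \<ge> 0" for F F' :: "real \<Rightarrow> real"
  proof (cases "x = y")
    case True then show ?thesis by simp
  next
    case False
    then have "x < y" using xy by simp
    from MVT2[OF this, of F F'] Fd obtain z where z: "x < z" "z < y" "F y - F x = (y - x) * F' z"
      by auto
    have "F' z \<ge> 0" using Fp z by simp
    then show ?thesis using z \<open>x < y\<close> by (smt (verit) mult_nonneg_nonneg)
  qed
  show "\<gamma> / u x + p x * u' x \<le> \<gamma> / u y + p y * u' y"
  proof (cases "\<gamma> \<le> 0")
    case True
    let ?F = "\<lambda>t. p t * u' x + \<gamma> / u t"
    let ?F' = "\<lambda>t. \<gamma> / (u t)^2 * u' x - \<gamma> * u' t / (u t)^2"
    have "?F x \<le> ?F y"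
    proof (rule Fmono[where F' = ?F'])
      fix t assume t: "t \<in> {x..y}"
      then have tJ: "t \<in> J" using sub by auto
      have "((\<lambda>t. p t * u' x + \<gamma> / u t) has_real_derivative
             (\<gamma> / (u t)^2 * u' x + \<gamma> * (- (u' t / (u t)^2)))) (at t)"
        using pder uder upos tJ
        by (auto intro!: derivative_eq_intros simp: power2_eq_square field_simps)
      then show "(?F has_real_derivative ?F' t) (at t)" by (simp add: algebra_simps)
      have "u' x \<le> u' t" using umono x tJ t by auto
      then have "\<gamma> * u' x \<ge> \<gamma> * u' t" using True by (simp add: mult_left_mono_neg)
      then have "\<gamma> * u' x - \<gamma> * u' t \<ge> 0" by simp
      then have "(\<gamma> * u' x - \<gamma> * u' t) / (u t)^2 \<ge> 0" by simp
      then show "?F' t \<ge> 0" by (simp add: diff_divide_distrib)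
    qed
    moreover have "p y * u' x \<le> p y * u' y" using umono x y xy ppos y by (simp add: mult_left_mono less_imp_le)
    ultimately show ?thesis by simp
  next
    case False
    let ?F = "\<lambda>t. p t * u' y + \<gamma> / u t"
    let ?F' = "\<lambda>t. \<gamma> / (u t)^2 * u' y - \<gamma> * u' t / (u t)^2"
    have "?F x \<le> ?F y"
    proof (rule Fmono[where F' = ?F'])
      fix t assume t: "t \<in> {x..y}"
      then have tJ: "t \<in> J" using sub by auto
      have "((\<lambda>t. p t * u' y + \<gamma> / u t) has_real_derivative
             (\<gamma> / (u t)^2 * u' y + \<gamma> * (- (u' t / (u t)^2)))) (at t)"
        using pder uder upos tJ
        by (auto intro!: derivative_eq_intros simp: power2_eq_square field_simps)
      then show "(?F has_real_derivative ?F' t) (at t)" by (simp add: algebra_simps)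
      have "u' t \<le> u' y" using umono y tJ t by auto
      then have "\<gamma> * u' y \<ge> \<gamma> * u' t" using False by (simp add: mult_left_mono)
      then have "\<gamma> * u' y - \<gamma> * u' t \<ge> 0" by simp
      then have "(\<gamma> * u' y - \<gamma> * u' t) / (u t)^2 \<ge> 0" by simp
      then show "?F' t \<ge> 0" by (simp add: diff_divide_distrib)
    qed
    moreover have "p x * u' x \<le> p x * u' y" using umono x y xy ppos x by (simp add: mult_left_mono less_imp_le)
    ultimately show ?thesis by simp
  qed
qed

lemma local_support_convex:
  fixes w :: "real \<Rightarrow> real"
  assumes A: "connected A" and cw: "continuous_on A w"
   and sup: "\<forall>x0\<in>A. \<exists>m \<delta>. \<delta> > 0 \<and> (\<forall>x\<in>A. \<bar>x - x0\<bar> < \<delta> \<longrightarrow> w x \<ge> w x0 + m * (x - x0))"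
  shows "convex_on A w"
proof (rule convex_on_linorderI)
  show "convex A" using A by (simp add: is_interval_connected_1[symmetric] is_interval_convex_1)
  fix t a b :: real assume t: "0 < t" "t < 1" and a: "a \<in> A" and b: "b \<in> A" and ab: "a < b"
  define sl where "sl = (w b - w a) / (b - a)"
  define g where "g z = w z - (w a + sl * (z - a))" for z
  have sub: "{a..b} \<subseteq> A" using connected_contains_Icc[OF A a b] .
  have cg: "continuous_on {a..b} g" unfolding g_def
    by (intro continuous_intros continuous_on_subset[OF cw sub])
  have ga: "g a = 0" by (simp add: g_def)
  have gb: "g b = 0" using ab by (simp add: g_def sl_def)
  have gle: "g z \<le> 0" if z: "z \<in> {a..b}" for z
  proof (rule ccontr)
    assume "\<not> g z \<le> 0"
    then have gz: "g z > 0" by simp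
    obtain xm where xm: "xm \<in> {a..b}" "\<forall>y\<in>{a..b}. g y \<le> g xm"
      using continuous_attains_sup[OF compact_Icc _ cg] ab by auto
    define M where "M = g xm"
    have Mpos: "M > 0" using xm z gz M_def by force
    define S where "S = {x \<in> {a..b}. g x = M}"
    have "closed S" unfolding S_def by (rule continuous_closed_preimage_constant[OF cg closed_atLeastAtMost])
    then have "compact S" unfolding S_def by (metis (no_types, lifting) S_def bounded_subset closed_atLeastAtMost compact_Icc compact_eq_bounded_closed mem_Collect_eq subsetI)
    moreover have "S \<noteq> {}" using xm M_def S_def by auto
    ultimately obtain s where s: "s \<in> S" "\<forall>y\<in>S. s \<le> y" using compact_attains_inf by blast
    have gs: "g s = M" "s \<in> {a..b}" using s S_def by auto
    have as: "a < s" using gs ga Mpos by (cases "s = a") auto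
    have sb: "s < b" using gs gb Mpos by (cases "s = b") auto
    have sA: "s \<in> A" using gs sub by auto
    obtain m \<delta> where md: "\<delta> > 0" "\<forall>x\<in>A. \<bar>x - s\<bar> < \<delta> \<longrightarrow> w x \<ge> w s + m * (x - s)"
      using sup sA by blast
    define h where "h = min \<delta> (min (s - a) (b - s)) / 2"
    have h: "h > 0" "h < \<delta>" "h < s - a" "h < b - s" using md as sb by (auto simp: h_def)
    have x1: "s - h \<in> {a..b}" "s + h \<in> {a..b}" using h by auto
    have x1A: "s - h \<in> A" "s + h \<in> A" using x1 sub by auto
    have e1: "w (s - h) \<ge> w s + m * (- h)" using md(2)[rule_format, OF x1A(1)] h by simp
    have e2: "w (s + h) \<ge> w s + m * h" using md(2)[rule_format, OF x1A(2)] h by simp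
    have l1: "g (s - h) \<ge> M + (m - sl) * (- h)"
      using e1 gs(1) unfolding g_def by (simp add: algebra_simps)
    have l2: "g (s + h) \<ge> M + (m - sl) * h"
      using e2 gs(1) unfolding g_def by (simp add: algebra_simps)
    have u1: "g (s - h) \<le> M" "g (s + h) \<le> M" using xm x1 M_def by auto
    have "(m - sl) * h \<le> 0" using l2 u1 by simp
    moreover have "(m - sl) * (-h) \<le> 0" using l1 u1 by simp
    ultimately have "(m - sl) * h = 0" by simp
    then have "m - sl = 0" using h(1) by simp
    then have "g (s - h) = M" using l1 u1 by simp
    then have "s - h \<in> S" using x1 S_def by auto
    then show False using s h by force
  qed
  have zin: "(1 - t) *\<^sub>R a + t *\<^sub>R b \<in> {a..b}"
  proof -
    have "(1 - t) *\<^sub>R a + t *\<^sub>R b = a + t * (b - a)" by (simp add: algebra_simps)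
    moreover have "t * (b - a) \<ge> 0" using t ab by simp
    moreover have "t * (b - a) \<le> 1 * (b - a)" using t ab by (intro mult_right_mono) auto
    ultimately show ?thesis by simp
  qed
  have "g ((1 - t) *\<^sub>R a + t *\<^sub>R b) \<le> 0" using gle zin .
  moreover have "(1 - t) *\<^sub>R a + t *\<^sub>R b - a = t * (b - a)" by (simp add: algebra_simps)
  ultimately have "w ((1 - t) *\<^sub>R a + t *\<^sub>R b) \<le> w a + sl * (t * (b - a))"
    unfolding g_def by simp
  also have "sl * (t * (b - a)) = t * (w b - w a)" using ab by (simp add: sl_def)
  finally show "w ((1 - t) *\<^sub>R a + t *\<^sub>R b) \<le> (1 - t) * w a + t * w b" by (simp add: algebra_simps)
qed

lemma const_sign:
  fixes g :: "real \<Rightarrow> real"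
  assumes "connected A" "continuous_on A g" "\<forall>x\<in>A. g x \<noteq> 0"
  shows "(\<forall>x\<in>A. g x > 0) \<or> (\<forall>x\<in>A. g x < 0)"
proof (rule ccontr)
  assume "\<not> ?thesis"
  then obtain x y where xy: "x \<in> A" "y \<in> A" "g x \<le> 0" "g y \<ge> 0" by (meson not_le)
  have c: "connected (g ` A)" using connected_continuous_image assms by blast
  have "{g x..g y} \<subseteq> g ` A" using connected_contains_Icc[OF c] xy by auto
  then have "0 \<in> g ` A" using xy by auto
  then show False using assms(3) by auto
qed

lemma inv_sqrt_deriv:
  fixes k' :: "real \<Rightarrow> real"
  assumes "open A" "x \<in> A" "\<forall>y\<in>A. \<sigma> * k' y > 0" "\<sigma> = 1 \<or> \<sigma> = -1"
    "(k' has_real_derivative k2) (at x)"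
  shows "\<exists>D. ((\<lambda>y. inverse (sqrt \<bar>k' y\<bar>)) has_real_derivative D) (at x)"
proof -
  have pos: "\<sigma> * k' x > 0" using assms by auto
  have "\<exists>D. ((\<lambda>y. inverse (sqrt (\<sigma> * k' y))) has_real_derivative D) (at x)"
    using pos assms(5)
  proof -
    have d1: "((\<lambda>y. \<sigma> * k' y) has_real_derivative \<sigma> * k2) (at x)" using assms(5) by (rule DERIV_cmult)
    have d2: "((\<lambda>y. sqrt (\<sigma> * k' y)) has_real_derivative (inverse (sqrt (\<sigma> * k' x)) / 2 * (\<sigma> * k2))) (at x)"
      using DERIV_chain2[OF DERIV_real_sqrt[OF pos] d1] .
    have "sqrt (\<sigma> * k' x) \<noteq> 0" using pos by auto
    from DERIV_inverse'[OF d2 this] show ?thesis by blast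
  qed
  then obtain D where D: "((\<lambda>y. inverse (sqrt (\<sigma> * k' y))) has_real_derivative D) (at x)" by blast
  have eq: "\<forall>y\<in>A. inverse (sqrt (\<sigma> * k' y)) = inverse (sqrt \<bar>k' y\<bar>)"
  proof
    fix y assume "y \<in> A"
    then have "\<sigma> * k' y > 0" using assms(3) by auto
    then have "\<sigma> * k' y = \<bar>k' y\<bar>" using assms(4) by (cases "\<sigma> = 1") auto
    then show "inverse (sqrt (\<sigma> * k' y)) = inverse (sqrt \<bar>k' y\<bar>)" by simp
  qed
  have "((\<lambda>y. inverse (sqrt \<bar>k' y\<bar>)) has_real_derivative D) (at x)"
    by (rule has_field_derivative_transform_within_open[OF D assms(1,2)]) (use eq in auto)
  then show ?thesis by blast
qed

lemma convex_on_eq: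
  fixes A :: "real set"
  assumes "convex_on A w" "\<And>x. x \<in> A \<Longrightarrow> f x = w x"
  shows "convex_on A f"
proof (rule convex_onI)
  show cA: "convex A" using assms(1) by (simp add: convex_on_def)
  fix t x y :: real assume t: "0 < t" "t < 1" and xy: "x \<in> A" "y \<in> A"
  have m: "(1 - t) *\<^sub>R x + t *\<^sub>R y \<in> A" using convexD[OF cA xy, of "1 - t" t] t by simp
  show "f ((1 - t) *\<^sub>R x + t *\<^sub>R y) \<le> (1 - t) * f x + t * f y"
    using convex_onD[OF assms(1), of t x y] t xy m assms(2) by simp
qed

lemma comp_convex:
  fixes k k' d :: "real \<Rightarrow> real"
  assumes A: "open A" "connected A" and B: "open B" "connected B"
   and kder: "\<forall>x\<in>A. (k has_real_derivative k' x) (at x)"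
   and k'dif: "\<forall>x\<in>A. k' differentiable (at x)"
   and k'nz: "\<forall>x\<in>A. k' x \<noteq> 0"
   and kconv: "convex_on A (\<lambda>x. inverse (sqrt \<bar>k' x\<bar>))"
   and kAB: "k ` A \<subseteq> B"
   and ddif: "\<forall>y\<in>B. d differentiable (at y)"
   and dnz: "\<forall>y\<in>B. d y \<noteq> 0"
   and dconv: "convex_on B (\<lambda>y. inverse (sqrt \<bar>d y\<bar>))"
  shows "convex_on A (\<lambda>x. inverse (sqrt \<bar>d (k x) * k' x\<bar>))"
proof -
  define u where "u x = inverse (sqrt \<bar>k' x\<bar>)" for x
  define v where "v y = inverse (sqrt \<bar>d y\<bar>)" for y
  have upos: "\<forall>x\<in>A. u x > 0" using k'nz by (simp add: u_def)
  have vpos: "\<forall>y\<in>B. v y > 0" using dnz by (simp add: v_def)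
  have ck': "continuous_on A k'"
    using k'dif by (meson continuous_at_imp_continuous_on differentiable_imp_continuous_within)
  have cd: "continuous_on B d"
    using ddif by (meson continuous_at_imp_continuous_on differentiable_imp_continuous_within)
  obtain \<sigma> :: real where \<sigma>: "\<sigma> = 1 \<or> \<sigma> = -1" "\<forall>x\<in>A. \<sigma> * k' x > 0"
  proof -
    from const_sign[OF A(2) ck' k'nz] show ?thesis
    proof
      assume "\<forall>x\<in>A. k' x > 0" then show ?thesis using that[of 1] by auto
    next
      assume "\<forall>x\<in>A. k' x < 0" then show ?thesis using that[of "-1"] by auto
    qed
  qed
  obtain \<tau> :: real where \<tau>: "\<tau> = 1 \<or> \<tau> = -1" "\<forall>y\<in>B. \<tau> * d y > 0"
  proof -
    from const_sign[OF B(2) cd dnz] show ?thesis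
    proof
      assume "\<forall>x\<in>B. d x > 0" then show ?thesis using that[of 1] by auto
    next
      assume "\<forall>x\<in>B. d x < 0" then show ?thesis using that[of "-1"] by auto
    qed
  qed
  have "\<forall>x\<in>A. \<exists>D. (u has_real_derivative D) (at x)"
  proof
    fix x assume x: "x \<in> A"
    obtain k2 where "(k' has_real_derivative k2) (at x)" using k'dif x real_differentiable_def by blast
    from inv_sqrt_deriv[OF A(1) x \<sigma>(2) \<sigma>(1) this] show "\<exists>D. (u has_real_derivative D) (at x)"
      unfolding u_def by blast
  qed
  then obtain u' where u': "\<forall>x\<in>A. (u has_real_derivative u' x) (at x)" by metis
  have "\<forall>y\<in>B. \<exists>D. (v has_real_derivative D) (at y)"
  proof
    fix x assume x: "x \<in> B"
    obtain k2 where "(d has_real_derivative k2) (at x)" using ddif x real_differentiable_def by blast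
    from inv_sqrt_deriv[OF B(1) x \<tau>(2) \<tau>(1) this] show "\<exists>D. (v has_real_derivative D) (at x)"
      unfolding v_def by blast
  qed
  then obtain v' where v': "\<forall>y\<in>B. (v has_real_derivative v' y) (at y)" by metis
  have uconv: "convex_on A u" using kconv by (simp add: u_def[abs_def])
  have vconv: "convex_on B v" using dconv by (simp add: v_def[abs_def])
  have umono: "\<forall>x\<in>A. \<forall>y\<in>A. x \<le> y \<longrightarrow> u' x \<le> u' y"
    using convex_deriv_mono[OF uconv A(1) A(2)] u' by blast
  have k'u: "k' x = \<sigma> / (u x)^2" if x: "x \<in> A" for x
  proof -
    have "(u x)^2 = inverse \<bar>k' x\<bar>" unfolding u_def
      by (simp add: power_inverse)
    moreover have "\<bar>k' x\<bar> = \<sigma> * k' x" using \<sigma> x by (cases "\<sigma> = 1") auto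
    ultimately have "(u x)^2 = inverse (\<sigma> * k' x)" by simp
    moreover have "u x \<noteq> 0" using upos x by auto
    ultimately show ?thesis using \<sigma>(1) k'nz x by (cases "\<sigma> = 1") (auto simp: field_simps)
  qed
  have vtan: "v s \<ge> v s0 + v' s0 * (s - s0)" if "s0 \<in> B" "s \<in> B" for s0 s
  proof -
    have "s0 \<in> interior B" using that B(1) interior_open by auto
    from convex_on_imp_above_tangent[OF vconv B(2) this that(2) has_field_derivative_at_within[OF v'[rule_format, OF that(1)]]]
    show ?thesis by simp
  qed
  have ck: "continuous_on A k"
    using kder by (meson continuous_at_imp_continuous_on DERIV_isCont)
  have cv: "continuous_on B v"
    using v' by (meson continuous_at_imp_continuous_on DERIV_isCont)
  have cu: "continuous_on A u"
    using u' by (meson continuous_at_imp_continuous_on DERIV_isCont)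
  define w where "w x = v (k x) * u x" for x
  have weq: "inverse (sqrt \<bar>d (k x) * k' x\<bar>) = w x" for x
    unfolding w_def u_def v_def by (simp add: abs_mult real_sqrt_mult)
  have "convex_on A w"
  proof (rule local_support_convex[OF A(2)])
    show "continuous_on A w" unfolding w_def
      by (intro continuous_intros continuous_on_compose2[OF cv ck kAB] cu)
    show "\<forall>x0\<in>A. \<exists>m \<delta>. \<delta> > 0 \<and> (\<forall>x\<in>A. \<bar>x - x0\<bar> < \<delta> \<longrightarrow> w x \<ge> w x0 + m * (x - x0))"
    proof
      fix x0 assume x0: "x0 \<in> A"
      define s0 where "s0 = k x0"
      have s0B: "s0 \<in> B" using kAB x0 s0_def by auto
      define \<beta> where "\<beta> = v' s0"
      define p where "p x = v s0 + \<beta> * (k x - s0)" for x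
      have pder: "(p has_real_derivative (\<beta> * \<sigma>) / (u x)^2) (at x)" if "x \<in> A" for x
      proof -
        have "(p has_real_derivative \<beta> * k' x) (at x)" unfolding p_def
          using kder that by (auto intro!: derivative_eq_intros)
        then show ?thesis using k'u[OF that] by simp
      qed
      have p0: "p x0 = v s0" by (simp add: p_def s0_def)
      have p0pos: "p x0 > 0" using p0 vpos s0B by auto
      have "isCont p x0" using pder[OF x0] by (rule DERIV_isCont)
      then obtain e1 where e1: "e1 > 0" "\<forall>x. dist x x0 < e1 \<longrightarrow> dist (p x) (p x0) < p x0"
        using p0pos unfolding continuous_at_eps_delta by blast
      obtain e2 where e2: "e2 > 0" "ball x0 e2 \<subseteq> A" using A(1) x0 open_contains_ball by blast
      define \<delta> where "\<delta> = min e1 e2"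
      define J where "J = {x0 - \<delta> <..< x0 + \<delta>}"
      have \<delta>: "\<delta> > 0" using e1 e2 by (simp add: \<delta>_def)
      have JA: "J \<subseteq> A"
      proof
        fix x assume "x \<in> J"
        then have "dist x0 x < e2" by (auto simp: J_def \<delta>_def dist_real_def)
        then show "x \<in> A" using e2 by auto
      qed
      have Jp: "\<forall>x\<in>J. p x > 0"
      proof
        fix x assume "x \<in> J"
        then have "dist x x0 < e1" by (auto simp: J_def \<delta>_def dist_real_def)
        then have "dist (p x) (p x0) < p x0" using e1 by auto
        then show "p x > 0" by (auto simp: dist_real_def)
      qed
      have J: "open J" "connected J" by (auto simp: J_def)
      have x0J: "x0 \<in> J" using \<delta> by (simp add: J_def)
      have qconv: "convex_on J (\<lambda>x. p x * u x)"
        by (rule pu_convex[OF J, where \<gamma> = "\<beta> * \<sigma>"]) (use upos u' umono pder Jp JA in \<open>auto simp: subset_iff\<close>)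
      define q' where "q' = (\<beta> * \<sigma>) / (u x0)^2 * u x0 + p x0 * u' x0"
      have qder: "((\<lambda>x. p x * u x) has_real_derivative q') (at x0)"
        unfolding q'_def using pder[OF x0] u' x0 by (auto intro!: derivative_eq_intros)
      have qtan: "p x * u x - p x0 * u x0 \<ge> q' * (x - x0)" if "x \<in> J" for x
      proof -
        have "x0 \<in> interior J" using x0J J(1) interior_open by auto
        from convex_on_imp_above_tangent[OF qconv J(2) this that has_field_derivative_at_within[OF qder]]
        show ?thesis .
      qed
      have wq: "w x \<ge> p x * u x" if "x \<in> A" for x
      proof -
        have "v (k x) \<ge> p x" using vtan[OF s0B, of "k x"] kAB that by (auto simp: p_def \<beta>_def)
        then show ?thesis unfolding w_def using upos that by (simp add: mult_right_mono)
      qed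
      have w0: "w x0 = p x0 * u x0" by (simp add: w_def p0 s0_def)
      show "\<exists>m \<delta>. \<delta> > 0 \<and> (\<forall>x\<in>A. \<bar>x - x0\<bar> < \<delta> \<longrightarrow> w x \<ge> w x0 + m * (x - x0))"
      proof (intro exI conjI ballI impI)
        show "\<delta> > 0" by fact
        fix x assume x: "x \<in> A" "\<bar>x - x0\<bar> < \<delta>"
        then have "x \<in> J" by (auto simp: J_def)
        then show "w x \<ge> w x0 + q' * (x - x0)" using qtan wq[OF x(1)] w0 by fastforce
      qed
    qed
  qed
  then show ?thesis by (rule convex_on_eq) (rule weq)
qed

primrec Dn :: "(real \<Rightarrow> real) \<Rightarrow> (real \<Rightarrow> real) \<Rightarrow> nat \<Rightarrow> real \<Rightarrow> real" where
  "Dn F D 0 x = 1"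
| "Dn F D (Suc j) x = D ((F ^^ j) x) * Dn F D j x"

locale SUm =
  fixes F D :: "real \<Rightarrow> real"
  assumes Fmap: "\<And>x. x \<in> {-1..1} \<Longrightarrow> F x \<in> {-1..1}"
    and Fder: "\<And>y. y \<in> {-1<..<1} \<Longrightarrow> (F has_real_derivative D y) (at y)"
    and Ddiff: "\<And>y. y \<in> {-1<..<1} \<Longrightarrow> D differentiable (at y)"
    and Dnz: "\<And>y. y \<in> {-1..1} \<Longrightarrow> y \<noteq> 0 \<Longrightarrow> D y \<noteq> 0"
    and convL: "convex_on {-1<..<0} (\<lambda>x. inverse (sqrt \<bar>D x\<bar>))"
    and convR: "convex_on {0<..<1} (\<lambda>x. inverse (sqrt \<bar>D x\<bar>))"
    and Fbd: "F (-1) \<in> {-1, 1}" "F 1 \<in> {-1, 1}"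
    and Fcont: "continuous_on {-1..1} F"
begin

lemma itermap: "x \<in> {-1..1} \<Longrightarrow> (F ^^ j) x \<in> {-1..1}"
  by (induction j) (auto simp del: atLeastAtMost_iff intro: Fmap)

lemma itercont: "continuous_on {-1..1} (F ^^ j)"
proof (induction j)
  case 0 then show ?case by (simp add: continuous_on_id)
next
  case (Suc j)
  have "continuous_on ((F ^^ j) ` {-1..1}) F"
    by (rule continuous_on_subset[OF Fcont]) (use itermap in blast)
  from continuous_on_compose[OF Suc this] show ?case by simp
qed

lemma bd_inv: "x \<in> {-1, 1} \<Longrightarrow> (F ^^ j) x \<in> {-1, 1}"
  by (induction j) (use Fbd in auto)

lemma interior_persist:
  assumes "x \<in> {-1..1}" "(F ^^ m) x \<in> {-1<..<1}" "j \<le> m"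
  shows "(F ^^ j) x \<in> {-1<..<1}"
proof (rule ccontr)
  assume a: "(F ^^ j) x \<notin> {-1<..<1}"
  have "(F ^^ j) x \<in> {-1..1}" using itermap assms(1) by blast
  with a have "(F ^^ j) x \<in> {-1, 1}" by auto
  then have "(F ^^ (m - j)) ((F ^^ j) x) \<in> {-1, 1}" by (rule bd_inv)
  moreover have "(F ^^ m) x = (F ^^ (m - j)) ((F ^^ j) x)"
    using assms(3) funpow_add[of "m - j" j F] by simp
  ultimately show False using assms(2) by auto
qed

lemma iter_deriv:
  assumes "\<forall>i<j. (F ^^ i) x \<in> {-1<..<1}"
  shows "((F ^^ j) has_real_derivative Dn F D j x) (at x)"
  using assms
proof (induction j)
  case 0 then show ?case by (simp add: DERIV_ident[unfolded id_def] id_def)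
next
  case (Suc j)
  have ih: "((F ^^ j) has_real_derivative Dn F D j x) (at x)" using Suc by auto
  have "(F has_real_derivative D ((F ^^ j) x)) (at ((F ^^ j) x))" using Suc.prems Fder by auto
  from DERIV_chain[OF this ih] show ?case by (simp add: o_def)
qed

lemma Dn_diff:
  assumes "\<forall>i<j. (F ^^ i) x \<in> {-1<..<1}"
  shows "Dn F D j differentiable (at x)"
  using assms
proof (induction j)
  case 0 then show ?case by simp
next
  case (Suc j)
  have ih: "Dn F D j differentiable (at x)" using Suc by auto
  have "(F ^^ j) differentiable (at x)"
    using iter_deriv[of j x] Suc.prems real_differentiable_def by auto
  moreover have "D differentiable (at ((F ^^ j) x))" using Suc.prems Ddiff by auto
  ultimately have "(\<lambda>x. D ((F ^^ j) x)) differentiable (at x)"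
    using differentiable_compose by blast
  then have "(\<lambda>x. D ((F ^^ j) x) * Dn F D j x) differentiable (at x)"
    using ih by (intro differentiable_mult)
  moreover have "Dn F D (Suc j) = (\<lambda>x. D ((F ^^ j) x) * Dn F D j x)" by auto
  ultimately show ?case by simp
qed

lemma Dn_nz:
  assumes "\<forall>i<j. (F ^^ i) x \<in> {-1<..<1} \<and> (F ^^ i) x \<noteq> 0"
  shows "Dn F D j x \<noteq> 0"
  using assms
proof (induction j)
  case 0 then show ?case by simp
next
  case (Suc j)
  then have "(F ^^ j) x \<in> {-1..1}" "(F ^^ j) x \<noteq> 0" by auto
  then have "D ((F ^^ j) x) \<noteq> 0" by (rule Dnz)
  with Suc show ?case by auto
qed

lemma iter_interior_deriv:
  assumes "x \<in> {-1..1}" "(F ^^ m) x \<in> {-1<..<1}" "j \<le> m"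
  shows "((F ^^ j) has_real_derivative Dn F D j x) (at x)"
  using iter_deriv interior_persist[OF assms(1,2)] assms(3) by auto

end

lemma SUm_from:
  assumes "S_unimodal F"
  shows "\<exists>D. SUm F D"
proof -
  from assms obtain f' f'' where
    fm: "F ` {-1..1} \<subseteq> {-1..1}" and
    d1: "\<forall>x\<in>{-1..1}. (F has_real_derivative f' x) (at x within {-1..1})" and
    d2: "\<forall>x\<in>{-1..1}. (f' has_real_derivative f'' x) (at x within {-1..1})" and
    z: "\<forall>x\<in>{-1..1}. f' x = 0 \<longleftrightarrow> x = 0" and
    cl: "convex_on {-1..<0} (\<lambda>x. inverse (sqrt \<bar>f' x\<bar>))" and
    cr: "convex_on {0<..1} (\<lambda>x. inverse (sqrt \<bar>f' x\<bar>))" and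
    b: "F (-1) \<in> {-1, 1}" "F 1 \<in> {-1, 1}"
    unfolding S_unimodal_def by blast
  have intr: "at y within {-1..1} = at y" if "y \<in> {-1<..<1}" for y :: real
    using that by (intro at_within_interior) simp
  have "SUm F f'"
  proof
    show "\<And>x. x \<in> {-1..1} \<Longrightarrow> F x \<in> {-1..1}" using fm by blast
    fix y :: real assume y: "y \<in> {-1<..<1}"
    then have yI: "y \<in> {-1..1}" by auto
    have "(F has_real_derivative f' y) (at y within {-1..1})" using d1 yI by blast
    then show "(F has_real_derivative f' y) (at y)" using intr[OF y] by simp
    have "(f' has_real_derivative f'' y) (at y within {-1..1})" using d2 yI by blast
    then have "(f' has_real_derivative f'' y) (at y)" using intr[OF y] by simp
    then show "f' differentiable (at y)" using real_differentiable_def by blast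
  next
    show "\<And>y. y \<in> {-1..1} \<Longrightarrow> y \<noteq> 0 \<Longrightarrow> f' y \<noteq> 0" using z by blast
    show "convex_on {-1<..<0} (\<lambda>x. inverse (sqrt \<bar>f' x\<bar>))"
      by (rule convex_on_subset[OF cl]) auto
    show "convex_on {0<..<1} (\<lambda>x. inverse (sqrt \<bar>f' x\<bar>))"
      by (rule convex_on_subset[OF cr]) auto
    show "F (-1) \<in> {-1, 1}" "F 1 \<in> {-1, 1}" by (fact b)+
    show "continuous_on {-1..1} F"
      using d1 by (meson DERIV_continuous continuous_on_eq_continuous_within)
  qed
  then show ?thesis by blast
qed

lemma conn_open_bounded:
  fixes S :: "real set"
  assumes "open S" "connected S" "S \<noteq> {}" "bdd_below S" "bdd_above S"
  shows "S = {Inf S<..<Sup S}"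
proof
  show "{Inf S<..<Sup S} \<subseteq> S"
  proof
    fix y assume y: "y \<in> {Inf S<..<Sup S}"
    obtain a where a: "a \<in> S" "a < y" using y cInf_less_iff[OF assms(3,4)] by auto
    obtain b where b: "b \<in> S" "y < b" using y less_cSup_iff[OF assms(3,5)] by auto
    show "y \<in> S" using connected_contains_Icc[OF assms(2) a(1) b(1)] a b by auto
  qed
  show "S \<subseteq> {Inf S<..<Sup S}"
  proof
    fix y assume y: "y \<in> S"
    obtain e where e: "e > 0" "ball y e \<subseteq> S" using assms(1) y open_contains_ball by blast
    have "y - e/2 \<in> S" "y + e/2 \<in> S" using e by (auto simp: dist_real_def subset_iff)
    then have "Inf S \<le> y - e/2" "y + e/2 \<le> Sup S"
      using cInf_lower[OF _ assms(4)] cSup_upper[OF _ assms(5)] by auto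
    then show "y \<in> {Inf S<..<Sup S}" using e by auto
  qed
qed

lemma comp_endpoint:
  fixes Os :: "real set"
  assumes "open Os" "connected_component_set Os x0 = {c<..<d}" "c < d"
  shows "c \<notin> Os" "d \<notin> Os"
proof -
  have x0: "x0 \<in> {c<..<d}"
  proof -
    have "connected_component_set Os x0 \<noteq> {}" using assms(2,3) by auto
    then have "x0 \<in> Os" using connected_component_eq_empty by blast
    then have "x0 \<in> connected_component_set Os x0" by (simp add: connected_component_refl)
    then show ?thesis using assms(2) by simp
  qed
  show "c \<notin> Os"
  proof
    assume c: "c \<in> Os"
    obtain e where e: "e > 0" "ball c e \<subseteq> Os" using assms(1) c open_contains_ball by blast
    have T: "{c - e/2<..<d} \<subseteq> Os"
    proof
      fix y assume y: "y \<in> {c - e/2<..<d}"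
      show "y \<in> Os"
      proof (cases "y > c")
        case True then have "y \<in> {c<..<d}" using y by auto
        then show ?thesis using assms(2) connected_component_subset by blast
      next
        case False then have "y \<in> ball c e" using y e by (auto simp: dist_real_def)
        then show ?thesis using e by auto
      qed
    qed
    have "{c - e/2<..<d} \<subseteq> connected_component_set Os x0"
      by (rule connected_component_maximal) (use x0 e T in auto)
    moreover have "c - e/4 \<in> {c - e/2<..<d}" using e assms(3) by auto
    ultimately have "c - e/4 \<in> {c<..<d}" using assms(2) by blast
    then show False using e by auto
  qed
  show "d \<notin> Os"
  proof
    assume c: "d \<in> Os"
    obtain e where e: "e > 0" "ball d e \<subseteq> Os" using assms(1) c open_contains_ball by blast
    have T: "{c<..<d + e/2} \<subseteq> Os"
    proof
      fix y assume y: "y \<in> {c<..<d + e/2}"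
      show "y \<in> Os"
      proof (cases "y < d")
        case True then have "y \<in> {c<..<d}" using y by auto
        then show ?thesis using assms(2) connected_component_subset by blast
      next
        case False then have "y \<in> ball d e" using y e by (auto simp: dist_real_def)
        then show ?thesis using e by auto
      qed
    qed
    have "{c<..<d + e/2} \<subseteq> connected_component_set Os x0"
      by (rule connected_component_maximal) (use x0 e T in auto)
    moreover have "d + e/4 \<in> {c<..<d + e/2}" using e assms(3) by auto
    ultimately have "d + e/4 \<in> {c<..<d}" using assms(2) by blast
    then show False using e by auto
  qed
qed

lemma inj_by_deriv:
  fixes g g' :: "real \<Rightarrow> real"
  assumes "\<forall>y\<in>{a..b}. (g has_real_derivative g' y) (at y)" "\<forall>y\<in>{a<..<b}. g' y \<noteq> 0"
  shows "inj_on g {a..b}"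
proof (rule inj_onI, rule ccontr)
  have *: False if uv: "u \<in> {a..b}" "v \<in> {a..b}" "u < v" "g u = g v" for u v
  proof -
    obtain z where z: "u < z" "z < v" "g v - g u = (v - u) * g' z"
      using MVT2[OF uv(3), of g g'] assms(1) uv by fastforce
    have "g' z \<noteq> 0" using assms(2) z uv by auto
    then show False using z uv by simp
  qed
  fix u v assume "u \<in> {a..b}" "v \<in> {a..b}" "g u = g v" "u \<noteq> v"
  then show False using *[of u v] *[of v u] by (cases "u < v") auto
qed

lemma side:
  fixes S :: "real set"
  assumes "connected S" "S \<subseteq> {-1<..<1}" "0 \<notin> S"
  shows "S \<subseteq> {-1<..<0} \<or> S \<subseteq> {0<..<1}"
proof (rule ccontr)
  assume "\<not> ?thesis"
  then obtain a b where ab: "a \<in> S" "b \<in> S" "a \<ge> 0" "b \<le> 0" using assms(2) by (auto simp: subset_iff)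
  have "{b..a} \<subseteq> S" using connected_contains_Icc[OF assms(1) ab(2,1)] .
  then show False using ab assms(3) by auto
qed

lemma ret_props:
  assumes "returns F U x"
  shows "ret_time F U x \<ge> 1" "(F ^^ ret_time F U x) x \<in> U"
    "\<And>j. 1 \<le> j \<Longrightarrow> j < ret_time F U x \<Longrightarrow> (F ^^ j) x \<notin> U"
proof -
  have ex: "\<exists>k. k \<ge> 1 \<and> (F ^^ k) x \<in> U" using assms by (auto simp: returns_def)
  show "ret_time F U x \<ge> 1" "(F ^^ ret_time F U x) x \<in> U"
    using LeastI_ex[OF ex] by (auto simp: ret_time_def)
  fix j assume "1 \<le> j" "j < ret_time F U x"
  then show "(F ^^ j) x \<notin> U" using not_less_Least unfolding ret_time_def by blast
qed

lemma ret_eq: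
  assumes "n \<ge> 1" "(F ^^ n) x \<in> U" "\<And>j. 1 \<le> j \<Longrightarrow> j < n \<Longrightarrow> (F ^^ j) x \<notin> U"
  shows "returns F U x" "ret_time F U x = n"
proof -
  show "returns F U x" using assms by (auto simp: returns_def)
  show "ret_time F U x = n" unfolding ret_time_def
    by (rule Least_equality) (use assms in \<open>auto simp: not_less[symmetric]\<close>)
qed

context SUm begin

lemma key:
  fixes \<theta> a0 b0 a1 b1 :: real and W :: "real set" and n :: nat
  assumes th: "0 < \<theta>" "\<theta> \<le> 1/5"
  and h: "a0 < b0" "a1 < b1" "a1 < 0" "0 < b1" "a0 \<le> a1" "b1 \<le> b0" "-\<theta> \<le> a0" "b0 \<le> \<theta>"
  and nice: "\<forall>k\<ge>1. \<forall>p\<in>{a0, b0, a1, b1}. (F ^^ k) p \<notin> {a0<..<b0}"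
  and sd: "b1 - a1 \<le> \<theta> * setdist {a1<..<b1} {a0, b0}"
  and zero: "(\<forall>k\<ge>1. (F ^^ k) 0 \<notin> {a0<..<b0}) \<or>
          (\<exists>k\<ge>1. (F ^^ k) 0 \<in> {a1<..<b1} \<and> (\<forall>j. 1 \<le> j \<and> j < k \<longrightarrow> (F ^^ j) 0 \<notin> {a0<..<b0}))"
  and Wb: "is_branch F {a1<..<b1} W" and W0: "0 \<notin> W" and Wn: "\<forall>x\<in>W. ret_time F {a1<..<b1} x = n"
  shows "\<exists>What. open_interval What \<and> W \<subseteq> What \<and> What \<subseteq> {a1<..<b1} \<and>
               bij_betw (F ^^ n) What {a0<..<b0} \<and>
               (\<forall>x\<in>What. \<exists>d. ((F ^^ n) has_real_derivative d) (at x) \<and> d \<noteq> 0) \<and>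
               (\<forall>C. is_branch F {a1<..<b1} C \<and> 0 \<in> C \<longrightarrow> What \<inter> C = {}) \<and>
               (\<forall>x\<in>W. \<exists>d. (first_return F {a1<..<b1} has_real_derivative d) (at x) \<and> \<bar>d\<bar> \<ge> 5)"
proof -
  define U0 where "U0 = {a0<..<b0}"
  define U1 where "U1 = {a1<..<b1}"
  have U1U0: "U1 \<subseteq> U0" using h by (auto simp: U0_def U1_def)
  have U0I: "U0 \<subseteq> {-1<..<1}" using h th by (auto simp: U0_def)
  have U1I: "U1 \<subseteq> {-1..1}" using U1U0 U0I by auto
  have U0cl: "{a0..b0} \<subseteq> {-1<..<1}" using h th by auto
  have Wc: "const_ret_interval F U1 W" and Wmax: "\<And>W'. const_ret_interval F U1 W' \<Longrightarrow> W \<subseteq> W' \<Longrightarrow> W' = W"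
    using Wb by (auto simp: is_branch_def U1_def)
  then obtain p q where pq: "p < q" "W = {p<..<q}" and WU1: "W \<subseteq> U1" and Wret: "\<forall>x\<in>W. returns F U1 x"
    by (auto simp: const_ret_interval_def open_interval_def)
  define x0 where "x0 = (p+q)/2"
  have x0W: "x0 \<in> W" using pq by (auto simp: x0_def)
  have Wprops: "n \<ge> 1 \<and> (F^^n) x \<in> U1 \<and> (\<forall>j. 1 \<le> j \<and> j < n \<longrightarrow> (F^^j) x \<notin> U1)" if "x \<in> W" for x
    using ret_props[OF Wret[rule_format, OF that]] Wn that U1_def by auto
  have n1: "n \<ge> 1" using Wprops x0W by blast
  have niceU: "(F^^k) pt \<notin> U0" if "k \<ge> 1" "pt \<in> {a0,b0,a1,b1}" for k pt
    using nice that U0_def by blast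
  have split: "(F^^n) z = (F^^(n-j)) ((F^^j) z)" if "j \<le> n" for z j
    using that funpow_add[of "n - j" j F] by simp
  define Os where "Os = (F^^n) -` U0 \<inter> U1"
  have oOs: "open Os"
  proof -
    have "continuous_on U1 (F^^n)" using continuous_on_subset[OF itercont U1I] .
    then show ?thesis unfolding Os_def using continuous_on_open_vimage[of U1 "F^^n"]
      by (auto simp: U1_def U0_def)
  qed
  define Wh where "Wh = connected_component_set Os x0"
  have x0Os: "x0 \<in> Os" using Wprops[OF x0W] WU1 x0W U1U0 by (auto simp: Os_def)
  have Wh: "open Wh" "connected Wh" "x0 \<in> Wh" "Wh \<subseteq> Os"
    unfolding Wh_def using open_connected_component[OF oOs] connected_connected_component
      connected_component_refl[OF x0Os] connected_component_subset by auto
  have WWh: "W \<subseteq> Wh" unfolding Wh_def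
  proof (rule connected_component_maximal[OF x0W])
    show "connected W" using pq by (simp add: convex_connected)
    show "W \<subseteq> Os"
    proof
      fix x assume x: "x \<in> W"
      then have "(F^^n) x \<in> U1" using Wprops by blast
      then show "x \<in> Os" using x WU1 U1U0 by (auto simp: Os_def)
    qed
  qed
  have WhU1: "Wh \<subseteq> U1" using Wh(4) Os_def by auto
  define c where "c = Inf Wh"
  define d where "d = Sup Wh"
  have Whcd: "Wh = {c<..<d}" unfolding c_def d_def
  proof (rule conn_open_bounded[OF Wh(1,2)])
    show "Wh \<noteq> {}" using Wh(3) by auto
    show "bdd_below Wh" using WhU1 unfolding U1_def bdd_below_def
      by (intro exI[of _ a1]) (auto simp: subset_iff less_imp_le)
    show "bdd_above Wh" using WhU1 unfolding U1_def bdd_above_def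
      by (intro exI[of _ b1]) (auto simp: subset_iff less_imp_le)
  qed
  have cd: "c < d" using Wh(3) Whcd by auto
  have cd_in: "a1 \<le> c" "d \<le> b1"
    using WhU1 Whcd cd greaterThanLessThan_subseteq_greaterThanLessThan[of c d a1 b1] by (auto simp: U1_def)
  have endO: "c \<notin> Os" "d \<notin> Os" using comp_endpoint[OF oOs Whcd[unfolded Wh_def] cd] by auto
  have endU0: "(F^^n) c \<notin> U0" "(F^^n) d \<notin> U0"
  proof -
    show "(F^^n) c \<notin> U0"
    proof (cases "c \<in> U1")
      case True then show ?thesis using endO by (auto simp: Os_def)
    next
      case False then have "c = a1" using cd_in cd by (auto simp: U1_def)
      then show ?thesis using niceU n1 by auto
    qed
    show "(F^^n) d \<notin> U0"
    proof (cases "d \<in> U1")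
      case True then show ?thesis using endO by (auto simp: Os_def)
    next
      case False then have "d = b1" using cd_in cd by (auto simp: U1_def)
      then show ?thesis using niceU n1 by auto
    qed
  qed
  have cdI: "{c..d} \<subseteq> {-1..1}" using cd_in h th by auto
  have img_cd: "(F^^n) y \<in> {a0..b0}" if "y \<in> {c..d}" for y
  proof -
    have "(F^^n) ` closure {c<..<d} \<subseteq> {a0..b0}"
    proof (rule image_closure_subset)
      show "continuous_on (closure {c<..<d}) (F ^^ n)"
        using continuous_on_subset[OF itercont cdI] cd by simp
      show "(F ^^ n) ` {c<..<d} \<subseteq> {a0..b0}" using Wh(4) Whcd by (auto simp: Os_def U0_def)
    qed simp
    then have "(F^^n) ` {c..d} \<subseteq> {a0..b0}" using cd by simp
    then show ?thesis using that by blast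
  qed
  have int_cd: "(F^^j) y \<in> {-1<..<1}" if "y \<in> {c..d}" "j \<le> n" for y j
    using interior_persist[of y n j] that img_cd[OF that(1)] cdI U0cl by auto
  have der_cd: "((F^^n) has_real_derivative Dn F D n y) (at y)" if "y \<in> {c..d}" for y
    using iter_deriv[of n y] int_cd[OF that] by auto
  have P2: "(F^^j) y \<notin> U1" if y: "y \<in> Wh" and j: "1 \<le> j" "j < n" for y j
  proof
    assume yU: "(F^^j) y \<in> U1"
    have cont: "continuous_on Wh (F^^j)"
      using continuous_on_subset[OF itercont] WhU1 U1I by blast
    have conn: "connected ((F^^j) ` Wh)" using connected_continuous_image[OF cont Wh(2)] .
    have x0out: "(F^^j) x0 \<notin> U1" using Wprops[OF x0W] j by auto
    have "a1 \<in> (F^^j) ` Wh \<or> b1 \<in> (F^^j) ` Wh"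
    proof (cases "(F^^j) x0 \<le> a1")
      case True
      have "{(F^^j) x0..(F^^j) y} \<subseteq> (F^^j) ` Wh"
        using connected_contains_Icc[OF conn] y Wh(3) by auto
      then show ?thesis using True yU by (auto simp: U1_def)
    next
      case False
      then have "(F^^j) x0 \<ge> b1" using x0out by (auto simp: U1_def)
      have "{(F^^j) y..(F^^j) x0} \<subseteq> (F^^j) ` Wh"
        using connected_contains_Icc[OF conn] y Wh(3) by auto
      moreover have "b1 \<in> {(F^^j) y..(F^^j) x0}" using \<open>(F^^j) x0 \<ge> b1\<close> yU by (auto simp: U1_def)
      ultimately show ?thesis by blast
    qed
    then obtain z where z: "z \<in> Wh" "(F^^j) z \<in> {a1, b1}" by auto
    have "(F^^n) z = (F^^(n-j)) ((F^^j) z)" using split j by auto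
    moreover have "(F^^(n-j)) ((F^^j) z) \<notin> U0" using niceU[of "n-j" "(F^^j) z"] z j by auto
    moreover have "(F^^n) z \<in> U0" using z Wh(4) by (auto simp: Os_def)
    ultimately show False by simp
  qed
  have retn: "returns F U1 y \<and> ret_time F U1 y = n" if "y \<in> Wh" "(F^^n) y \<in> U1" for y
    using ret_eq[of n F y U1] n1 that P2 by auto
  have P3: "0 \<notin> Wh"
  proof
    assume z0: "0 \<in> Wh"
    have Fn0: "(F^^n) 0 \<in> U0" using z0 Wh(4) by (auto simp: Os_def)
    have Fn0U1: "(F^^n) 0 \<in> U1"
    proof -
      from zero show ?thesis
      proof
        assume "\<forall>k\<ge>1. (F ^^ k) 0 \<notin> {a0<..<b0}"
        then show ?thesis using Fn0 n1 by (auto simp: U0_def)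
      next
        assume "\<exists>k\<ge>1. (F ^^ k) 0 \<in> {a1<..<b1} \<and> (\<forall>j. 1 \<le> j \<and> j < k \<longrightarrow> (F ^^ j) 0 \<notin> {a0<..<b0})"
        then obtain k where k: "k \<ge> 1" "(F ^^ k) 0 \<in> U1" "\<forall>j. 1 \<le> j \<and> j < k \<longrightarrow> (F ^^ j) 0 \<notin> U0"
          by (auto simp: U0_def U1_def)
        have "\<not> k < n" using P2[OF z0 k(1)] k(2) by blast
        moreover have "\<not> n < k" using k(3) n1 Fn0 by blast
        ultimately have "k = n" by simp
        then show ?thesis using k by simp
      qed
    qed
    define lo where "lo = min 0 x0"
    define hi where "hi = max 0 x0"
    have seg: "closed_segment 0 x0 = {lo..hi}" by (auto simp: lo_def hi_def closed_segment_eq_real_ivl)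
    have lohi_Wh: "{lo..hi} \<subseteq> Wh"
      using connected_contains_Icc[OF Wh(2)] z0 Wh(3) by (auto simp: lo_def hi_def min_def max_def)
    have lohi_cd: "{lo..hi} \<subseteq> {c..d}" using lohi_Wh Whcd by auto
    have inj: "inj_on (F^^n) {lo..hi}"
    proof (rule inj_by_deriv)
      show "\<forall>y\<in>{lo..hi}. ((F^^n) has_real_derivative Dn F D n y) (at y)" using der_cd lohi_cd by blast
      show "\<forall>y\<in>{lo<..<hi}. Dn F D n y \<noteq> 0"
      proof
        fix y assume y: "y \<in> {lo<..<hi}"
        have y0: "y \<noteq> 0" using y by (auto simp: lo_def hi_def)
        have yWh: "y \<in> Wh" using y lohi_Wh by auto
        show "Dn F D n y \<noteq> 0"
        proof (rule Dn_nz, intro allI impI conjI)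
          fix i assume i: "i < n"
          show "(F^^i) y \<in> {-1<..<1}" using int_cd[of y i] yWh Whcd i by auto
          show "(F^^i) y \<noteq> 0"
          proof (cases "i = 0")
            case True then show ?thesis using y0 by simp
          next
            case False then have "(F^^i) y \<notin> U1" using P2[OF yWh, of i] i by auto
            then show ?thesis using h by (auto simp: U1_def)
          qed
        qed
      qed
    qed
    have cont: "continuous_on (closed_segment 0 x0) (F^^n)"
      using continuous_on_subset[OF itercont] lohi_cd cdI seg by (metis subset_trans)
    have "(F^^n) ` closed_segment 0 x0 = closed_segment ((F^^n) 0) ((F^^n) x0)"
      by (rule continuous_injective_image_segment_1[OF cont]) (use inj seg in simp)
    also have "\<dots> \<subseteq> U1"
      by (rule closed_segment_subset) (use Fn0U1 Wprops[OF x0W] in \<open>auto simp: U1_def\<close>)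
    finally have segU1: "\<forall>y\<in>{lo..hi}. (F^^n) y \<in> U1" using seg by auto
    have "isCont (F^^n) 0" using der_cd[of 0] lohi_cd by (auto simp: lo_def hi_def intro: DERIV_isCont)
    define r where "r = min ((F^^n) 0 - a1) (b1 - (F^^n) 0)"
    have r: "r > 0" using Fn0U1 by (auto simp: r_def U1_def)
    obtain e1 where e1: "e1 > 0" "\<forall>y. dist y 0 < e1 \<longrightarrow> dist ((F^^n) y) ((F^^n) 0) < r"
      using \<open>isCont (F^^n) 0\<close> r unfolding continuous_at_eps_delta by blast
    obtain e2 where e2: "e2 > 0" "ball 0 e2 \<subseteq> Wh" using Wh(1) z0 open_contains_ball by blast
    define e where "e = min e1 e2"
    have e: "e > 0" using e1 e2 by (simp add: e_def)
    have ball: "y \<in> Wh \<and> (F^^n) y \<in> U1" if "\<bar>y\<bar> < e" for y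
    proof
      show "y \<in> Wh" using that e2 by (auto simp: e_def dist_real_def subset_iff)
      have "dist ((F^^n) y) ((F^^n) 0) < r" using e1 that by (auto simp: e_def dist_real_def)
      then show "(F^^n) y \<in> U1" by (auto simp: r_def U1_def dist_real_def)
    qed
    define W' where "W' = {min p (-e/2)<..<max q (e/2)}"
    have x0pq: "p < x0" "x0 < q" using x0W pq by auto
    have not0: "\<not> (p < 0 \<and> 0 < q)" using W0 pq by auto
    have cover: "y \<in> W \<or> \<bar>y\<bar> < e \<or> y \<in> {lo..hi}" if "y \<in> W'" for y
      using that x0pq not0 e pq unfolding W'_def lo_def hi_def
      by (auto simp: min_def max_def split: if_splits)
    have W'good: "y \<in> Wh \<and> (F^^n) y \<in> U1" if "y \<in> W'" for y
      using cover[OF that] WWh Wprops ball segU1 lohi_Wh by blast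
    have "const_ret_interval F U1 W'"
      unfolding const_ret_interval_def
    proof (intro conjI)
      show "open_interval W'" unfolding open_interval_def W'_def using pq e
        by (intro exI[of _ "min p (-e/2)"] exI[of _ "max q (e/2)"]) auto
      show "W' \<subseteq> U1" using W'good WhU1 by blast
      show "\<forall>x\<in>W'. returns F U1 x" using W'good retn by blast
      show "\<exists>n. \<forall>x\<in>W'. ret_time F U1 x = n" by (intro exI[of _ n]) (use W'good retn in blast)
    qed
    moreover have "W \<subseteq> W'" using pq by (auto simp: W'_def)
    ultimately have "W' = W" by (rule Wmax)
    moreover have "0 \<in> W'" using pq e by (auto simp: W'_def)
    ultimately show False using W0 by simp
  qed
  have nz_Wh: "\<forall>i<n. (F^^i) y \<in> {-1<..<1} \<and> (F^^i) y \<noteq> 0" if yWh: "y \<in> Wh" for y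
  proof (intro allI impI conjI)
    fix i assume i: "i < n"
    show "(F^^i) y \<in> {-1<..<1}" using int_cd[of y i] yWh Whcd i by auto
    show "(F^^i) y \<noteq> 0"
    proof (cases "i = 0")
      case True then show ?thesis using P3 yWh by auto
    next
      case False then have "(F^^i) y \<notin> U1" using P2[OF yWh, of i] i by auto
      then show ?thesis using h by (auto simp: U1_def)
    qed
  qed
  have derWh: "((F^^n) has_real_derivative Dn F D n y) (at y) \<and> Dn F D n y \<noteq> 0" if "y \<in> Wh" for y
    using der_cd[of y] that Whcd Dn_nz[OF nz_Wh[OF that]] by auto
  have inj: "inj_on (F^^n) {c..d}"
    by (rule inj_by_deriv[where g' = "Dn F D n"]) (use der_cd derWh Whcd in auto)
  have FcFd: "(F^^n) c \<noteq> (F^^n) d" using inj cd by (auto dest: inj_onD)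
  have Fc: "(F^^n) c \<in> {a0, b0}" using img_cd[of c] endU0 cd by (auto simp: U0_def)
  have Fd: "(F^^n) d \<in> {a0, b0}" using img_cd[of d] endU0 cd by (auto simp: U0_def)
  have endvals: "{(F^^n) c, (F^^n) d} = {a0, b0}" using Fc Fd FcFd by auto
  have imgcd: "(F^^n) ` {c..d} = {a0..b0}"
  proof -
    have cs: "closed_segment c d = {c..d}" using cd by (simp add: closed_segment_eq_real_ivl)
    have "(F^^n) ` closed_segment c d = closed_segment ((F^^n) c) ((F^^n) d)"
      by (rule continuous_injective_image_segment_1)
         (use continuous_on_subset[OF itercont cdI] inj cs in auto)
    also have "\<dots> = {a0..b0}" using Fc Fd FcFd h(1) by (auto simp: closed_segment_eq_real_ivl)
    finally show ?thesis using cs by simp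
  qed
  have imgWh: "(F^^n) ` Wh = U0"
  proof -
    have "Wh = {c..d} - {c, d}" using Whcd cd by auto
    then have "(F^^n) ` Wh = (F^^n) ` {c..d} - (F^^n) ` {c, d}"
      using inj_on_image_set_diff[OF inj, of "{c..d}" "{c,d}"] cd by auto
    also have "\<dots> = {a0..b0} - {a0, b0}" using imgcd endvals by simp
    also have "\<dots> = U0" using h by (auto simp: U0_def)
    finally show ?thesis .
  qed
  have bij: "bij_betw (F^^n) Wh U0"
  proof -
    have "Wh \<subseteq> {c..d}" using Whcd by auto
    then show ?thesis unfolding bij_betw_def using inj_on_subset[OF inj] imgWh by blast
  qed
  have central: "Wh \<inter> C = {}" if C: "is_branch F U1 C" "0 \<in> C" for C
  proof (rule ccontr)
    assume "Wh \<inter> C \<noteq> {}"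
    then obtain y where y: "y \<in> Wh" "y \<in> C" by auto
    from C obtain p' q' m where Cpq: "C = {p'<..<q'}" and Cret: "\<forall>z\<in>C. returns F U1 z" and
      Cm: "\<forall>z\<in>C. ret_time F U1 z = m"
      by (auto simp: is_branch_def const_ret_interval_def open_interval_def)
    have mn: "m \<ge> n"
    proof (rule ccontr)
      assume "\<not> m \<ge> n"
      then have "m < n" by simp
      moreover have "m \<ge> 1" "(F^^m) y \<in> U1" using ret_props[of F U1 y] Cret Cm y by auto
      ultimately show False using P2[OF y(1)] by auto
    qed
    obtain e where e: "e \<in> {c, d}" "e \<in> C"
    proof (cases "y > 0")
      case True
      then have "0 \<le> c" using P3 y(1) Whcd by (metis greaterThanLessThan_iff le_less_linear less_trans)
      moreover have "c < y" using y(1) Whcd by auto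
      ultimately have "c \<in> C" using C(2) y(2) Cpq by auto
      then show ?thesis using that by auto
    next
      case False
      then have "y < 0" using P3 y(1) by (cases "y = 0") auto
      then have "d \<le> 0" using P3 y(1) Whcd by (metis greaterThanLessThan_iff le_less_linear less_trans)
      moreover have "y < d" using y(1) Whcd by auto
      ultimately have "d \<in> C" using C(2) y(2) Cpq by auto
      then show ?thesis using that by auto
    qed
    have Fe: "(F^^n) e \<in> {a0, b0}" using e Fc Fd by auto
    have eU: "(F^^m) e \<in> U1" using ret_props[of F U1 e] Cret Cm e by auto
    show False
    proof (cases "m = n")
      case True then show ?thesis using Fe eU h by (auto simp: U1_def)
    next
      case False
      then have "m - n \<ge> 1" using mn by simp
      then have "(F^^(m-n)) ((F^^n) e) \<notin> U0" using niceU Fe by auto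
      moreover have "(F^^m) e = (F^^(m-n)) ((F^^n) e)" using mn funpow_add[of "m-n" n F] by simp
      ultimately show ?thesis using eU U1U0 by auto
    qed
  qed
  have WhI: "Wh \<subseteq> {-1..1}" using WhU1 U1I by auto
  have conv: "convex_on Wh (\<lambda>y. inverse (sqrt \<bar>Dn F D j y\<bar>))" if "j \<le> n" for j
    using that
  proof (induction j)
    case 0
    have "convex Wh" using Whcd by simp
    then show ?case by (simp add: convex_on_const)
  next
    case (Suc j)
    then have jn: "j < n" by simp
    have intj: "\<forall>i<j. (F^^i) y \<in> {-1<..<1}" if "y \<in> Wh" for y
      using nz_Wh[OF that] jn by auto
    have contj: "continuous_on Wh (F^^j)" using continuous_on_subset[OF itercont WhI] .
    have connj: "connected ((F^^j) ` Wh)" using connected_continuous_image[OF contj Wh(2)] .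
    have subj: "(F^^j) ` Wh \<subseteq> {-1<..<1}" "0 \<notin> (F^^j) ` Wh" using nz_Wh jn by auto
    obtain B where B: "B = {-1<..<0} \<or> B = {0<..<1}" "(F^^j) ` Wh \<subseteq> B"
      using side[OF connj subj] by blast
    have Bo: "open B" "connected B" using B(1) by auto
    have BI: "B \<subseteq> {-1<..<1}" "0 \<notin> B" using B(1) by auto
    have Bconv: "convex_on B (\<lambda>y. inverse (sqrt \<bar>D y\<bar>))" using B(1) convL convR by auto
    have "convex_on Wh (\<lambda>x. inverse (sqrt \<bar>D ((F^^j) x) * Dn F D j x\<bar>))"
    proof (rule comp_convex[OF Wh(1,2) Bo, where k="F^^j" and k'="Dn F D j" and d=D])
      show "\<forall>x\<in>Wh. ((F^^j) has_real_derivative Dn F D j x) (at x)" using iter_deriv intj by blast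
      show "\<forall>x\<in>Wh. Dn F D j differentiable (at x)" using Dn_diff intj by blast
      show "\<forall>x\<in>Wh. Dn F D j x \<noteq> 0" using Dn_nz nz_Wh jn by auto
      show "convex_on Wh (\<lambda>x. inverse (sqrt \<bar>Dn F D j x\<bar>))" using Suc by simp
      show "(F^^j) ` Wh \<subseteq> B" by (fact B(2))
      show "\<forall>y\<in>B. D differentiable (at y)" using Ddiff BI by auto
      show "\<forall>y\<in>B. D y \<noteq> 0"
      proof
        fix y assume "y \<in> B"
        then have "y \<in> {-1..1}" "y \<noteq> 0" using BI by auto
        then show "D y \<noteq> 0" by (rule Dnz)
      qed
      show "convex_on B (\<lambda>y. inverse (sqrt \<bar>D y\<bar>))" by (fact Bconv)
    qed
    then show ?case by simp
  qed
  have convn: "convex_on Wh (\<lambda>y. inverse (sqrt \<bar>Dn F D n y\<bar>))" using conv by simp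
  have sd1: "setdist U1 {a0, b0} \<le> a1 - a0" "setdist U1 {a0, b0} \<le> b0 - b1"
  proof -
    have cl: "closure U1 = {a1..b1}" using h by (simp add: U1_def)
    have "setdist (closure U1) {a0, b0} \<le> dist a1 a0" by (rule setdist_le_dist) (use cl h in auto)
    then show "setdist U1 {a0, b0} \<le> a1 - a0" using h by (simp add: dist_real_def)
    have "setdist (closure U1) {a0, b0} \<le> dist b1 b0" by (rule setdist_le_dist) (use cl h in auto)
    then show "setdist U1 {a0, b0} \<le> b0 - b1" using h by (simp add: dist_real_def)
  qed
  define L where "L = b1 - a1"
  have Lpos: "L > 0" using h by (simp add: L_def)
  have gap: "L / \<theta> \<le> \<bar>v - w\<bar>" if "v \<in> {a0, b0}" "w \<in> U1" for v w
  proof -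
    have "L \<le> \<theta> * setdist U1 {a0, b0}" using sd by (simp add: L_def U1_def)
    then have "L / \<theta> \<le> setdist U1 {a0, b0}" using th by (simp add: field_simps)
    moreover have "setdist U1 {a0, b0} \<le> \<bar>v - w\<bar>" using sd1 that by (auto simp: U1_def)
    ultimately show ?thesis by simp
  qed
  have bound: "\<bar>Dn F D n x\<bar> \<ge> 5" if xW: "x \<in> W" for x
  proof -
    have xWh: "x \<in> Wh" using xW WWh by auto
    have xcd: "c < x" "x < d" using xWh Whcd by auto
    have FxU1: "(F^^n) x \<in> U1" using Wprops[OF xW] by blast
    let ?h = "\<lambda>y. inverse (sqrt \<bar>Dn F D n y\<bar>)"
    have hlt: "?h y < ?h x \<longleftrightarrow> \<bar>Dn F D n y\<bar> > \<bar>Dn F D n x\<bar>" if "y \<in> Wh" for y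
    proof -
      have "\<bar>Dn F D n y\<bar> > 0" "\<bar>Dn F D n x\<bar> > 0" using derWh that xWh by auto
      then show ?thesis by (simp add: inverse_less_iff_less)
    qed
    have MP: "(\<forall>y\<in>{x<..<d}. \<bar>Dn F D n y\<bar> \<le> \<bar>Dn F D n x\<bar>) \<or> (\<forall>y\<in>{c<..<x}. \<bar>Dn F D n y\<bar> \<le> \<bar>Dn F D n x\<bar>)"
    proof (rule ccontr)
      assume "\<not> ?thesis"
      then obtain y z where y: "y \<in> {x<..<d}" "\<bar>Dn F D n y\<bar> > \<bar>Dn F D n x\<bar>"
        and z: "z \<in> {c<..<x}" "\<bar>Dn F D n z\<bar> > \<bar>Dn F D n x\<bar>" by (auto simp: not_le)
      have yWh: "y \<in> Wh" and zWh: "z \<in> Wh" using y z xcd Whcd by auto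
      have hy: "?h y < ?h x" using hlt[OF yWh] y by simp
      have hz: "?h z < ?h x" using hlt[OF zWh] z by simp
      define t where "t = (x - z) / (y - z)"
      have t: "0 \<le> t" "t \<le> 1" "0 < t" "t < 1" using y z by (auto simp: t_def field_simps)
      have yz: "y - z \<noteq> 0" using y z by auto
      have tt: "t * (y - z) = x - z" using yz by (simp add: t_def)
      have "(1 - t) *\<^sub>R z + t *\<^sub>R y = z + t * (y - z)" by (simp add: algebra_simps)
      then have xt: "(1 - t) *\<^sub>R z + t *\<^sub>R y = x" using tt by simp
      have "?h x \<le> (1 - t) * ?h z + t * ?h y"
        using convex_onD[OF convn t(1,2) zWh yWh] xt by simp
      also have "\<dots> < (1 - t) * ?h x + t * ?h x"
        using hy hz t by (intro add_less_le_mono mult_strict_left_mono mult_left_mono) auto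
      also have "\<dots> = ?h x" by (simp add: algebra_simps)
      finally show False by simp
    qed
    have dx: "\<bar>Dn F D n x\<bar> > 0" using derWh xWh by auto
    have "L / \<theta> \<le> L * \<bar>Dn F D n x\<bar>"
      using MP
    proof
      assume R: "\<forall>y\<in>{x<..<d}. \<bar>Dn F D n y\<bar> \<le> \<bar>Dn F D n x\<bar>"
      obtain \<xi> where \<xi>: "x < \<xi>" "\<xi> < d" "(F^^n) d - (F^^n) x = (d - x) * Dn F D n \<xi>"
        using MVT2[OF xcd(2), of "F^^n" "Dn F D n"] der_cd xcd by fastforce
      have "L / \<theta> \<le> \<bar>(F^^n) d - (F^^n) x\<bar>" using gap Fd FxU1 by blast
      also have "\<dots> = (d - x) * \<bar>Dn F D n \<xi>\<bar>" using \<xi> by (simp add: abs_mult)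
      also have "\<dots> \<le> (d - x) * \<bar>Dn F D n x\<bar>" using R \<xi> by (intro mult_left_mono) auto
      also have "\<dots> \<le> L * \<bar>Dn F D n x\<bar>" using xcd cd_in xWh WhU1 dx
        by (intro mult_right_mono) (auto simp: L_def U1_def)
      finally show ?thesis .
    next
      assume R: "\<forall>y\<in>{c<..<x}. \<bar>Dn F D n y\<bar> \<le> \<bar>Dn F D n x\<bar>"
      obtain \<xi> where \<xi>: "c < \<xi>" "\<xi> < x" "(F^^n) x - (F^^n) c = (x - c) * Dn F D n \<xi>"
        using MVT2[OF xcd(1), of "F^^n" "Dn F D n"] der_cd xcd by fastforce
      have "L / \<theta> \<le> \<bar>(F^^n) c - (F^^n) x\<bar>" using gap Fc FxU1 by blast
      also have "\<dots> = \<bar>(F^^n) x - (F^^n) c\<bar>" by (rule abs_minus_commute)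
      also have "\<dots> = (x - c) * \<bar>Dn F D n \<xi>\<bar>" using \<xi> by (simp add: abs_mult)
      also have "\<dots> \<le> (x - c) * \<bar>Dn F D n x\<bar>" using R \<xi> by (intro mult_left_mono) auto
      also have "\<dots> \<le> L * \<bar>Dn F D n x\<bar>" using xcd cd_in xWh WhU1 dx
        by (intro mult_right_mono) (auto simp: L_def U1_def)
      finally show ?thesis .
    qed
    then have "L * (1 / \<theta>) \<le> L * \<bar>Dn F D n x\<bar>" by simp
    then have "1 / \<theta> \<le> \<bar>Dn F D n x\<bar>" using Lpos mult_le_cancel_left_pos by blast
    moreover have "5 \<le> 1 / \<theta>" using th by (simp add: field_simps)
    ultimately show ?thesis by simp
  qed
  have fr: "\<exists>d. (first_return F U1 has_real_derivative d) (at x) \<and> \<bar>d\<bar> \<ge> 5" if xW: "x \<in> W" for x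
  proof (intro exI conjI)
    have oW: "open W" using pq by simp
    have "((F^^n) has_real_derivative Dn F D n x) (at x)" using derWh xW WWh by auto
    then show "(first_return F U1 has_real_derivative Dn F D n x) (at x)"
      by (rule has_field_derivative_transform_within_open[OF _ oW xW])
         (use Wn in \<open>auto simp: first_return_def U1_def\<close>)
    show "\<bar>Dn F D n x\<bar> \<ge> 5" using bound xW by blast
  qed
  show ?thesis
  proof (intro exI conjI)
    show "open_interval Wh" unfolding open_interval_def using Whcd cd by blast
    show "W \<subseteq> Wh" by (fact WWh)
    show "Wh \<subseteq> {a1<..<b1}" using WhU1 by (simp add: U1_def)
    show "bij_betw (F ^^ n) Wh {a0<..<b0}" using bij by (simp add: U0_def)
    show "\<forall>x\<in>Wh. \<exists>d. ((F ^^ n) has_real_derivative d) (at x) \<and> d \<noteq> 0" using derWh by blast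
    show "\<forall>C. is_branch F {a1<..<b1} C \<and> 0 \<in> C \<longrightarrow> Wh \<inter> C = {}" using central by (auto simp: U1_def)
    show "\<forall>x\<in>W. \<exists>d. (first_return F {a1<..<b1} has_real_derivative d) (at x) \<and> 5 \<le> \<bar>d\<bar>"
      using fr by (simp add: U1_def)
  qed
qed

end

lemma key2:
  fixes F :: "real \<Rightarrow> real" and \<theta> :: real
  assumes SU: "S_unimodal F" and th: "0 < \<theta> \<and> \<theta> < 1/5"
  shows "\<forall>a0 b0 a1 b1. a0 < b0 \<and> a1 < b1 \<and>
         a1 < 0 \<and> 0 < b1 \<and> a0 \<le> a1 \<and> b1 \<le> b0 \<and> -\<theta> \<le> a0 \<and> b0 \<le> \<theta> \<and>
         F a0 = F b0 \<and> preperiodic F (F a0) \<and>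
         F a1 = F b1 \<and> preperiodic F (F a1) \<and>
         (\<forall>k\<ge>1. \<forall>p\<in>{a0, b0, a1, b1}. (F ^^ k) p \<notin> {a0<..<b0}) \<and>
         b1 - a1 \<le> \<theta> * setdist {a1<..<b1} {a0, b0} \<and>
         ((\<forall>k\<ge>1. (F ^^ k) 0 \<notin> {a0<..<b0}) \<or>
          (\<exists>k\<ge>1. (F ^^ k) 0 \<in> {a1<..<b1} \<and> (\<forall>j. 1 \<le> j \<and> j < k \<longrightarrow> (F ^^ j) 0 \<notin> {a0<..<b0})))
       \<longrightarrow>
         (\<forall>W n. is_branch F {a1<..<b1} W \<and> 0 \<notin> W \<and>
                 (\<forall>x\<in>W. ret_time F {a1<..<b1} x = n) \<longrightarrow>
            (\<exists>What. open_interval What \<and> W \<subseteq> What \<and> What \<subseteq> {a1<..<b1} \<and>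
               bij_betw (F ^^ n) What {a0<..<b0} \<and>
               (\<forall>x\<in>What. \<exists>d. ((F ^^ n) has_real_derivative d) (at x) \<and> d \<noteq> 0) \<and>
               (\<forall>C. is_branch F {a1<..<b1} C \<and> 0 \<in> C \<longrightarrow> What \<inter> C = {}))) \<and>
         (\<forall>W. is_branch F {a1<..<b1} W \<and> 0 \<notin> W \<longrightarrow>
            (\<forall>x\<in>W. \<exists>d. (first_return F {a1<..<b1} has_real_derivative d) (at x) \<and> \<bar>d\<bar> \<ge> 5))"
proof (intro allI impI)
  fix a0 b0 a1 b1 :: real
  assume H: "a0 < b0 \<and> a1 < b1 \<and>
         a1 < 0 \<and> 0 < b1 \<and> a0 \<le> a1 \<and> b1 \<le> b0 \<and> -\<theta> \<le> a0 \<and> b0 \<le> \<theta> \<and>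
         F a0 = F b0 \<and> preperiodic F (F a0) \<and>
         F a1 = F b1 \<and> preperiodic F (F a1) \<and>
         (\<forall>k\<ge>1. \<forall>p\<in>{a0, b0, a1, b1}. (F ^^ k) p \<notin> {a0<..<b0}) \<and>
         b1 - a1 \<le> \<theta> * setdist {a1<..<b1} {a0, b0} \<and>
         ((\<forall>k\<ge>1. (F ^^ k) 0 \<notin> {a0<..<b0}) \<or>
          (\<exists>k\<ge>1. (F ^^ k) 0 \<in> {a1<..<b1} \<and> (\<forall>j. 1 \<le> j \<and> j < k \<longrightarrow> (F ^^ j) 0 \<notin> {a0<..<b0})))"
  obtain D where "SUm F D" using SUm_from[OF SU] by blast
  then interpret SUm F D .
  have th': "0 < \<theta>" "\<theta> \<le> 1/5" using th by auto
  have hh: "a0 < b0" "a1 < b1" "a1 < 0" "0 < b1" "a0 \<le> a1" "b1 \<le> b0" "-\<theta> \<le> a0" "b0 \<le> \<theta>"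
    using H by auto
  have nice: "\<forall>k\<ge>1. \<forall>p\<in>{a0, b0, a1, b1}. (F ^^ k) p \<notin> {a0<..<b0}" using H by (elim conjE)
  have sd: "b1 - a1 \<le> \<theta> * setdist {a1<..<b1} {a0, b0}" using H by (elim conjE)
  have zero: "(\<forall>k\<ge>1. (F ^^ k) 0 \<notin> {a0<..<b0}) \<or>
          (\<exists>k\<ge>1. (F ^^ k) 0 \<in> {a1<..<b1} \<and> (\<forall>j. 1 \<le> j \<and> j < k \<longrightarrow> (F ^^ j) 0 \<notin> {a0<..<b0}))"
    using H by (elim conjE)
  note K = key[OF th' hh nice sd zero]
  show "(\<forall>W n. is_branch F {a1<..<b1} W \<and> 0 \<notin> W \<and>
                 (\<forall>x\<in>W. ret_time F {a1<..<b1} x = n) \<longrightarrow>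
            (\<exists>What. open_interval What \<and> W \<subseteq> What \<and> What \<subseteq> {a1<..<b1} \<and>
               bij_betw (F ^^ n) What {a0<..<b0} \<and>
               (\<forall>x\<in>What. \<exists>d. ((F ^^ n) has_real_derivative d) (at x) \<and> d \<noteq> 0) \<and>
               (\<forall>C. is_branch F {a1<..<b1} C \<and> 0 \<in> C \<longrightarrow> What \<inter> C = {}))) \<and>
         (\<forall>W. is_branch F {a1<..<b1} W \<and> 0 \<notin> W \<longrightarrow>
            (\<forall>x\<in>W. \<exists>d. (first_return F {a1<..<b1} has_real_derivative d) (at x) \<and> \<bar>d\<bar> \<ge> 5))"
  proof (intro conjI allI impI)
    fix W n assume A: "is_branch F {a1<..<b1} W \<and> 0 \<notin> W \<and> (\<forall>x\<in>W. ret_time F {a1<..<b1} x = n)"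
    then have A1: "is_branch F {a1<..<b1} W" and A2: "0 \<notin> W" and A3: "\<forall>x\<in>W. ret_time F {a1<..<b1} x = n"
      by simp_all
    from K[OF A1 A2 A3] obtain What where P: "open_interval What" "W \<subseteq> What" "What \<subseteq> {a1<..<b1}"
      "bij_betw (F ^^ n) What {a0<..<b0}"
      "\<forall>x\<in>What. \<exists>d. ((F ^^ n) has_real_derivative d) (at x) \<and> d \<noteq> 0"
      "\<forall>C. is_branch F {a1<..<b1} C \<and> 0 \<in> C \<longrightarrow> What \<inter> C = {}"
      by (elim exE conjE) (rule that)
    show "\<exists>What. open_interval What \<and> W \<subseteq> What \<and> What \<subseteq> {a1<..<b1} \<and>
               bij_betw (F ^^ n) What {a0<..<b0} \<and>
               (\<forall>x\<in>What. \<exists>d. ((F ^^ n) has_real_derivative d) (at x) \<and> d \<noteq> 0) \<and>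
               (\<forall>C. is_branch F {a1<..<b1} C \<and> 0 \<in> C \<longrightarrow> What \<inter> C = {})"
      by (rule exI[of _ What]) (intro conjI P)
  next
    fix W assume A: "is_branch F {a1<..<b1} W \<and> 0 \<notin> W"
    then have A1: "is_branch F {a1<..<b1} W" and A2: "0 \<notin> W" by simp_all
    then obtain n where n: "\<forall>x\<in>W. ret_time F {a1<..<b1} x = n"
      by (auto simp: is_branch_def const_ret_interval_def)
    from K[OF A1 A2 n] obtain What where
      "\<forall>x\<in>W. \<exists>d. (first_return F {a1<..<b1} has_real_derivative d) (at x) \<and> \<bar>d\<bar> \<ge> 5"
      by (elim exE conjE) (rule that)
    then show "\<forall>x\<in>W. \<exists>d. (first_return F {a1<..<b1} has_real_derivative d) (at x) \<and> \<bar>d\<bar> \<ge> 5" .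
  qed
qed

theorem mainTheorem11:
  fixes f :: "real \<Rightarrow> real \<Rightarrow> real" and \<epsilon> :: real
  assumes "misiurewicz_rooted_family f \<epsilon>"
  shows "\<exists>\<theta>\<^sub>0>0. \<forall>\<theta>. 0 < \<theta> \<and> \<theta> < \<theta>\<^sub>0 \<longrightarrow>
    (\<exists>t\<^sub>1>0. \<forall>t\<in>{0..\<epsilon>}. t < t\<^sub>1 \<longrightarrow>
      (\<forall>a0 b0 a1 b1. a0 < b0 \<and> a1 < b1 \<and>
         a1 < 0 \<and> 0 < b1 \<and> a0 \<le> a1 \<and> b1 \<le> b0 \<and> -\<theta> \<le> a0 \<and> b0 \<le> \<theta> \<and>
         f t a0 = f t b0 \<and> preperiodic (f t) (f t a0) \<and>
         f t a1 = f t b1 \<and> preperiodic (f t) (f t a1) \<and>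
         (\<forall>k\<ge>1. \<forall>p\<in>{a0, b0, a1, b1}. (f t ^^ k) p \<notin> {a0<..<b0}) \<and>
         b1 - a1 \<le> \<theta> * setdist {a1<..<b1} {a0, b0} \<and>
         ((\<forall>k\<ge>1. (f t ^^ k) 0 \<notin> {a0<..<b0}) \<or>
          (\<exists>k\<ge>1. (f t ^^ k) 0 \<in> {a1<..<b1} \<and> (\<forall>j. 1 \<le> j \<and> j < k \<longrightarrow> (f t ^^ j) 0 \<notin> {a0<..<b0})))
       \<longrightarrow>
         (\<forall>W n. is_branch (f t) {a1<..<b1} W \<and> 0 \<notin> W \<and>
                 (\<forall>x\<in>W. ret_time (f t) {a1<..<b1} x = n) \<longrightarrow>
            (\<exists>What. open_interval What \<and> W \<subseteq> What \<and> What \<subseteq> {a1<..<b1} \<and>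
               bij_betw (f t ^^ n) What {a0<..<b0} \<and>
               (\<forall>x\<in>What. \<exists>d. ((f t ^^ n) has_real_derivative d) (at x) \<and> d \<noteq> 0) \<and>
               (\<forall>C. is_branch (f t) {a1<..<b1} C \<and> 0 \<in> C \<longrightarrow> What \<inter> C = {}))) \<and>
         (\<forall>W. is_branch (f t) {a1<..<b1} W \<and> 0 \<notin> W \<longrightarrow>
            (\<forall>x\<in>W. \<exists>d. (first_return (f t) {a1<..<b1} has_real_derivative d) (at x) \<and> \<bar>d\<bar> \<ge> 5))))"
proof -
  have fam: "\<forall>t\<in>{0..\<epsilon>}. S_unimodal (f t)"
    using assms unfolding misiurewicz_rooted_family_def by auto
  show ?thesis
    apply (intro exI[of _ "1/5::real"] conjI)
     apply simp
    apply (intro allI impI)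
    apply (rule exI[of _ "1::real"])
    apply (rule conjI)
     apply simp
    apply (intro ballI impI)
    apply (rule key2)
     apply (use fam in blast)
    apply assumption
    done
qed

end
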